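(* Let $\alpha\in(0,1]$, $w\in\mathbb{R}^p$ with $w_k>0$ for all $k$, and let $g(\beta)=\alpha\|w\circ\beta\|_1+\frac{1-\alpha}{2}\|\beta\|_2^2$. If $$\lambda\ge\max_{1\le k\le p}\frac{1}{n^2\alpha w_k}\Big\{\Big|\sum_{i=1}^n\sum_{j=1}^n\delta_i(x_{i,k}-x_{j,k})\mathbf{1}(y_i<y_j)\Big|+\sum_{i=1}^n\sum_{j=1}^n\mathbf{1}\{(i,j)\in\mathcal{K}\}\delta_i|x_{i,k}-x_{j,k}|\Big\},$$ then $\hat\beta=0$ is a minimizer of $\frac{1}{n^2}\sum_{i=1}^n\sum_{j=1}^n\delta_i\{e_i(\beta)-e_j(\beta)\}^-+\lambda g(\beta)$ over $\beta\in\mathbb{R}^p$.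
   Context: Data: $n\ge2$, $y_1,\dots,y_n>0$, $x_i=(x_{i,1},\dots,x_{i,p})^\top\in\mathbb{R}^p$, $\delta_i\in\{0,1\}$; $e_i(\beta)=\log y_i-\beta^\top x_i$; $a^-=\max(-a,0)$; $\circ$ is the elementwise product; $\mathcal{K}=\{(i,j): y_i=y_j,\ 1\le i\le n,\ 1\le j\le n\}$. *)

theory Defs
  imports "HOL-Analysis.Analysis"
begin

text \<open>Data indexed by i in {1..n}, covariate coordinates k in {1..p}.
  Vectors in R^p are represented as functions nat => real, of which only the
  coordinates 1..p are used.\<close>

definition negpart :: "real \<Rightarrow> real" where
  "negpart a = max (- a) 0"

definition resid :: "(nat \<Rightarrow> real) \<Rightarrow> (nat \<Rightarrow> nat \<Rightarrow> real) \<Rightarrow> nat \<Rightarrow> (nat \<Rightarrow> real) \<Rightarrow> nat \<Rightarrow> real" where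
  "resid y x p \<beta> i = ln (y i) - (\<Sum>k=1..p. \<beta> k * x i k)"

definition enet_penalty :: "real \<Rightarrow> (nat \<Rightarrow> real) \<Rightarrow> nat \<Rightarrow> (nat \<Rightarrow> real) \<Rightarrow> real" where
  "enet_penalty \<alpha> w p \<beta> =
     \<alpha> * (\<Sum>k=1..p. \<bar>w k * \<beta> k\<bar>) + (1 - \<alpha>) / 2 * (\<Sum>k=1..p. (\<beta> k)\<^sup>2)"

definition gehan_objective :: "nat \<Rightarrow> nat \<Rightarrow> (nat \<Rightarrow> real) \<Rightarrow> (nat \<Rightarrow> nat \<Rightarrow> real) \<Rightarrow> (nat \<Rightarrow> real)
    \<Rightarrow> real \<Rightarrow> real \<Rightarrow> (nat \<Rightarrow> real) \<Rightarrow> (nat \<Rightarrow> real) \<Rightarrow> real" where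
  "gehan_objective n p y x \<delta> \<alpha> lam w \<beta> =
     1 / (real n)\<^sup>2 * (\<Sum>i=1..n. \<Sum>j=1..n.
        \<delta> i * negpart (resid y x p \<beta> i - resid y x p \<beta> j))
     + lam * enet_penalty \<alpha> w p \<beta>"

definition lambda_max :: "nat \<Rightarrow> nat \<Rightarrow> (nat \<Rightarrow> real) \<Rightarrow> (nat \<Rightarrow> nat \<Rightarrow> real) \<Rightarrow> (nat \<Rightarrow> real)
    \<Rightarrow> real \<Rightarrow> (nat \<Rightarrow> real) \<Rightarrow> real" where
  "lambda_max n p y x \<delta> \<alpha> w =
     Max ((\<lambda>k. 1 / ((real n)\<^sup>2 * \<alpha> * w k) *
        (\<bar>\<Sum>i=1..n. \<Sum>j=1..n. \<delta> i * (x i k - x j k) * (if y i < y j then 1 else 0)\<bar>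
         + (\<Sum>i=1..n. \<Sum>j=1..n. (if y i = y j then 1 else 0) * \<delta> i * \<bar>x i k - x j k\<bar>)))
      ` {1..p})"

end

theory Submission
  imports Defs
begin

lemma pair_bound:
  assumes "yi > 0" "yj > 0" "d \<ge> 0"
  shows "d * negpart (ln yi - ln yj - u) \<ge> d * negpart (ln yi - ln yj) + d * (if yi < yj then 1 else 0) * u"
proof -
  have "negpart (ln yi - ln yj - u) \<ge> negpart (ln yi - ln yj) + (if yi < yj then 1 else 0) * u"
  proof (cases "yi < yj")
    case True
    then have "ln yi < ln yj" using assms by simp
    then show ?thesis using True unfolding negpart_def by auto
  next
    case False
    then have "ln yi \<ge> ln yj" using assms by simp
    then show ?thesis using False unfolding negpart_def by auto
  qed
  then show ?thesis using assms(3)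
    by (metis distrib_left mult.assoc mult_left_mono)
qed

theorem mainTheorem5:
  fixes n p :: nat and y :: "nat \<Rightarrow> real" and x :: "nat \<Rightarrow> nat \<Rightarrow> real"
    and \<delta> :: "nat \<Rightarrow> real" and \<alpha> lam :: real and w :: "nat \<Rightarrow> real"
  assumes "n \<ge> 2" and "p \<ge> 1"
    and "\<forall>i\<in>{1..n}. y i > 0"
    and "\<forall>i\<in>{1..n}. \<delta> i \<in> {0, 1}"
    and "0 < \<alpha>" and "\<alpha> \<le> 1"
    and "\<forall>k\<in>{1..p}. w k > 0"
    and "lam \<ge> lambda_max n p y x \<delta> \<alpha> w"
  shows "\<forall>\<beta>. gehan_objective n p y x \<delta> \<alpha> lam w (\<lambda>_. 0)
              \<le> gehan_objective n p y x \<delta> \<alpha> lam w \<beta>"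
proof
  fix \<beta> :: "nat \<Rightarrow> real"
  define N :: real where "N = (real n)\<^sup>2"
  have Npos: "N > 0" using assms(1) by (simp add: N_def)
  define S where "S k = (\<Sum>i=1..n. \<Sum>j=1..n. \<delta> i * (x i k - x j k) * (if y i < y j then 1 else 0))" for k
  define T where "T k = (\<Sum>i=1..n. \<Sum>j=1..n. (if y i = y j then 1 else 0) * \<delta> i * \<bar>x i k - x j k\<bar>)" for k
  have dpos: "\<delta> i \<ge> 0" if "i \<in> {1..n}" for i using assms(4) that by fastforce
  have Tpos: "T k \<ge> 0" for k unfolding T_def
    by (intro sum_nonneg) (auto intro!: mult_nonneg_nonneg dpos)
  define f where "f k = 1 / (N * \<alpha> * w k) * (\<bar>S k\<bar> + T k)" for k
  have lm: "lambda_max n p y x \<delta> \<alpha> w = Max (f ` {1..p})"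
    unfolding lambda_max_def f_def S_def T_def N_def by simp
  have fk: "f k \<le> lam" if "k \<in> {1..p}" for k
  proof -
    have "f k \<le> Max (f ` {1..p})" using that by (intro Max_ge) auto
    then show ?thesis using assms(8) lm by simp
  qed
  have Sk: "\<bar>S k\<bar> \<le> N * lam * \<alpha> * w k" if "k \<in> {1..p}" for k
  proof -
    have wk: "w k > 0" using assms(7) that by auto
    have pos: "N * \<alpha> * w k > 0" using Npos assms(5) wk by simp
    have "\<bar>S k\<bar> + T k \<le> lam * (N * \<alpha> * w k)"
      using fk[OF that] pos unfolding f_def by (simp add: divide_simps mult.commute)
    then show ?thesis using Tpos[of k] by (simp add: algebra_simps)
  qed
  have lampos: "lam \<ge> 0"
  proof -
    have w1: "w 1 > 0" using assms(7) assms(2) by auto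
    have "f 1 \<ge> 0" unfolding f_def using Npos assms(5) w1 Tpos[of 1]
      by (intro mult_nonneg_nonneg) auto
    then show ?thesis using fk[of 1] assms(2) by auto
  qed
  define u where "u i j = (\<Sum>k=1..p. \<beta> k * (x i k - x j k))" for i j
  have rd: "resid y x p \<beta> i - resid y x p \<beta> j = ln (y i) - ln (y j) - u i j" for i j
    unfolding resid_def u_def by (simp add: right_diff_distrib sum_subtractf)
  have r0: "resid y x p (\<lambda>_. 0) i - resid y x p (\<lambda>_. 0) j = ln (y i) - ln (y j)" for i j
    unfolding resid_def by simp
  have A: "(\<Sum>i=1..n. \<Sum>j=1..n. \<delta> i * negpart (resid y x p \<beta> i - resid y x p \<beta> j))
     \<ge> (\<Sum>i=1..n. \<Sum>j=1..n. \<delta> i * negpart (resid y x p (\<lambda>_. 0) i - resid y x p (\<lambda>_. 0) j)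
        + \<delta> i * (if y i < y j then 1 else 0) * u i j)"
    unfolding rd r0
    by (intro sum_mono pair_bound) (use assms(3) dpos in auto)
  have B: "(\<Sum>i=1..n. \<Sum>j=1..n. \<delta> i * (if y i < y j then 1 else 0) * u i j) = (\<Sum>k=1..p. \<beta> k * S k)"
  proof -
    have "(\<Sum>i=1..n. \<Sum>j=1..n. \<delta> i * (if y i < y j then 1 else 0) * u i j)
       = (\<Sum>i=1..n. \<Sum>j=1..n. \<Sum>k=1..p. \<beta> k * (\<delta> i * (x i k - x j k) * (if y i < y j then 1 else 0)))"
      unfolding u_def by (simp add: sum_distrib_left mult_ac)
    also have "\<dots> = (\<Sum>i=1..n. \<Sum>k=1..p. \<Sum>j=1..n. \<beta> k * (\<delta> i * (x i k - x j k) * (if y i < y j then 1 else 0)))"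
      by (rule sum.cong[OF refl], rule sum.swap)
    also have "\<dots> = (\<Sum>k=1..p. \<Sum>i=1..n. \<Sum>j=1..n. \<beta> k * (\<delta> i * (x i k - x j k) * (if y i < y j then 1 else 0)))"
      by (rule sum.swap)
    also have "\<dots> = (\<Sum>k=1..p. \<beta> k * S k)"
      unfolding S_def by (simp add: sum_distrib_left)
    finally show ?thesis .
  qed
  have C: "(\<Sum>k=1..p. \<beta> k * S k) \<ge> - (N * lam * \<alpha> * (\<Sum>k=1..p. \<bar>w k * \<beta> k\<bar>))"
  proof -
    have "(\<Sum>k=1..p. \<beta> k * S k) \<ge> (\<Sum>k=1..p. - (N * lam * \<alpha> * \<bar>w k * \<beta> k\<bar>))"
    proof (intro sum_mono)
      fix k assume k: "k \<in> {1..p}"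
      have wk: "w k > 0" using assms(7) k by auto
      have "\<bar>\<beta> k * S k\<bar> \<le> \<bar>\<beta> k\<bar> * (N * lam * \<alpha> * w k)"
        using Sk[OF k] by (simp add: abs_mult mult_left_mono)
      also have "\<dots> = N * lam * \<alpha> * \<bar>w k * \<beta> k\<bar>" using wk by (simp add: abs_mult)
      finally show "- (N * lam * \<alpha> * \<bar>w k * \<beta> k\<bar>) \<le> \<beta> k * S k" by linarith
    qed
    then show ?thesis by (simp add: sum_negf sum_distrib_left)
  qed
  have pen0: "enet_penalty \<alpha> w p (\<lambda>_. 0) = 0" unfolding enet_penalty_def by simp
  have pen: "enet_penalty \<alpha> w p \<beta> \<ge> \<alpha> * (\<Sum>k=1..p. \<bar>w k * \<beta> k\<bar>)"
    unfolding enet_penalty_def using assms(6)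
    by (simp add: sum_nonneg)
  define L0 where "L0 = (\<Sum>i=1..n. \<Sum>j=1..n. \<delta> i * negpart (resid y x p (\<lambda>_. 0) i - resid y x p (\<lambda>_. 0) j))"
  define L where "L = (\<Sum>i=1..n. \<Sum>j=1..n. \<delta> i * negpart (resid y x p \<beta> i - resid y x p \<beta> j))"
  define W where "W = (\<Sum>k=1..p. \<bar>w k * \<beta> k\<bar>)"
  have LL: "L \<ge> L0 - N * lam * \<alpha> * W"
    using A B C unfolding L_def L0_def W_def by (simp add: sum.distrib)
  have "1 / N * L \<ge> 1 / N * L0 - lam * \<alpha> * W"
  proof -
    have "1 / N * L \<ge> 1 / N * (L0 - N * lam * \<alpha> * W)"
      using LL Npos by (simp add: divide_right_mono)
    also have "1 / N * (L0 - N * lam * \<alpha> * W) = 1 / N * L0 - lam * \<alpha> * W"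
      using Npos by (simp add: field_simps)
    finally show ?thesis .
  qed
  moreover have "lam * enet_penalty \<alpha> w p \<beta> \<ge> lam * (\<alpha> * W)"
    using pen lampos unfolding W_def by (simp add: mult_left_mono)
  ultimately show "gehan_objective n p y x \<delta> \<alpha> lam w (\<lambda>_. 0)
              \<le> gehan_objective n p y x \<delta> \<alpha> lam w \<beta>"
    unfolding gehan_objective_def pen0 L_def[symmetric] L0_def[symmetric] N_def[symmetric]
    by simp
qed

end
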